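(* Let $F^\sharp$ be a skew-symmetric endomorphism of a real vector space $V$ endowed with a non-degenerate inner product $g^\flat=\langle\,,\,\rangle$ of signature $\{p,q\}$ with $p$ or $q$ non-zero. Assume $F^\sharp\circ F^\sharp=\mu\,k\otimes\boldsymbol k$ with $k\in V$ non-zero and null and $\mu\neq0$. Suppose moreover that either (i) $V$ has Lorentzian signature, or (ii) $F^\sharp(\langle k\rangle^\perp)\subset\operatorname{span}(k)$. Then there exists $w\in V$, linearly independent of and orthogonal to $k$, such that $$F^\sharp=k\otimes\boldsymbol w-w\otimes\boldsymbol k,\qquad \mu=-\langle w,w\rangle.$$ Conversely, any $F^\sharp$ of this form with $k$ null and $w$ orthogonal to $k$ satisfies $F^\sharp\circ F^\sharp=-\langle w,w\rangle\,k\otimes\boldsymbol k$.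
   Context: Skew-symmetric: $\langle F^\sharp x,y\rangle=-\langle x,F^\sharp y\rangle$. $u\otimes\boldsymbol v$ denotes the linear map $x\mapsto u\langle v,x\rangle$. $\langle k\rangle^\perp=\{x\in V:\langle k,x\rangle=0\}$. *)

theory Defs
  imports "HOL-Analysis.Analysis"
begin

definition nondeg_inner :: "('a::euclidean_space \<Rightarrow> 'a \<Rightarrow> real) \<Rightarrow> bool" where
  "nondeg_inner B \<longleftrightarrow> bilinear B \<and> (\<forall>x y. B x y = B y x)
     \<and> (\<forall>x. (\<forall>y. B x y = 0) \<longrightarrow> x = 0)"

definition has_signature :: "('a::euclidean_space \<Rightarrow> 'a \<Rightarrow> real) \<Rightarrow> nat \<Rightarrow> nat \<Rightarrow> bool" where
  "has_signature B p q \<longleftrightarrow> (\<exists>P N. finite P \<and> finite N \<and> P \<inter> N = {}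
     \<and> independent (P \<union> N) \<and> span (P \<union> N) = UNIV
     \<and> card P = p \<and> card N = q
     \<and> (\<forall>x\<in>P. B x x = 1) \<and> (\<forall>x\<in>N. B x x = -1)
     \<and> (\<forall>x\<in>P \<union> N. \<forall>y\<in>P \<union> N. x \<noteq> y \<longrightarrow> B x y = 0))"

definition lorentzian :: "('a::euclidean_space \<Rightarrow> 'a \<Rightarrow> real) \<Rightarrow> bool" where
  "lorentzian B \<longleftrightarrow> (\<exists>n. has_signature B 1 n \<or> has_signature B n 1)"

definition skew_sym :: "('a::euclidean_space \<Rightarrow> 'a \<Rightarrow> real) \<Rightarrow> ('a \<Rightarrow> 'a) \<Rightarrow> bool" where
  "skew_sym B F \<longleftrightarrow> linear F \<and> (\<forall>x y. B (F x) y = - B x (F y))"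

definition tens :: "('a::euclidean_space \<Rightarrow> 'a \<Rightarrow> real) \<Rightarrow> 'a \<Rightarrow> 'a \<Rightarrow> 'a \<Rightarrow> 'a" where
  "tens B u v = (\<lambda>x. B v x *\<^sub>R u)"

end

theory Submission
  imports Defs
begin

lemma bil_sum_r:
  fixes B :: "'a::euclidean_space \<Rightarrow> 'a \<Rightarrow> real"
  assumes "bilinear B" "finite N"
  shows "B x (\<Sum>v\<in>N. c v *\<^sub>R v) = (\<Sum>v\<in>N. c v * B x v)"
proof -
  have l: "linear (\<lambda>y. B x y)" using assms by (simp add: bilinear_def)
  show ?thesis using linear_sum[OF l, of "\<lambda>v. c v *\<^sub>R v" N] linear_scale[OF l]
    by simp
qed

lemma bil_sum_l:
  fixes B :: "'a::euclidean_space \<Rightarrow> 'a \<Rightarrow> real"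
  assumes "bilinear B" "finite N"
  shows "B (\<Sum>v\<in>N. c v *\<^sub>R v) x = (\<Sum>v\<in>N. c v * B v x)"
proof -
  have l: "linear (\<lambda>y. B y x)" using assms by (simp add: bilinear_def)
  show ?thesis using linear_sum[OF l, of "\<lambda>v. c v *\<^sub>R v" N] linear_scale[OF l]
    by simp
qed

lemma def_span:
  fixes B :: "'a::euclidean_space \<Rightarrow> 'a \<Rightarrow> real" and s :: real
  assumes bil: "bilinear B" and fin: "finite N" and d: "\<forall>x\<in>N. B x x = s" and s: "s \<noteq> 0"
    and orth: "\<forall>x\<in>N. \<forall>y\<in>N. x \<noteq> y \<longrightarrow> B x y = 0"
    and z: "z \<in> span N" and zz: "B z z = 0"
  shows "z = 0"
proof -
  obtain c where zc: "z = (\<Sum>v\<in>N. c v *\<^sub>R v)" using z span_finite[OF fin] by auto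
  have bx: "B x z = c x * s" if "x \<in> N" for x
  proof -
    have "B x z = (\<Sum>v\<in>N. c v * B x v)" using bil_sum_r[OF bil fin] zc by simp
    also have "\<dots> = (\<Sum>v\<in>N. if v = x then c x * s else 0)"
      by (rule sum.cong) (use that d orth in auto)
    also have "\<dots> = c x * s" using that fin by simp
    finally show ?thesis .
  qed
  have "B z z = (\<Sum>v\<in>N. c v * B v z)" using bil_sum_l[OF bil fin] zc by metis
  also have "\<dots> = (\<Sum>v\<in>N. (c v)^2) * s" using bx by (simp add: sum_distrib_right power2_eq_square mult.assoc)
  finally have "(\<Sum>v\<in>N. (c v)^2) = 0" using zz s by simp
  hence "\<forall>v\<in>N. (c v)^2 = 0" using fin by (simp add: sum_nonneg_eq_0_iff)
  thus ?thesis using zc by simp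
qed

lemma lor_core:
  fixes B :: "'a::euclidean_space \<Rightarrow> 'a \<Rightarrow> real" and s :: real
  assumes bil: "bilinear B" and sym: "\<forall>x y. B x y = B y x"
    and fin: "finite N" and d: "\<forall>x\<in>N. B x x = s" and s: "s \<noteq> 0"
    and orth: "\<forall>x\<in>N. \<forall>y\<in>N. x \<noteq> y \<longrightarrow> B x y = 0"
    and sp: "span (insert e N) = UNIV"
    and kk: "B k k = 0" and k0: "k \<noteq> 0" and vv: "B v v = 0" and kv: "B k v = 0"
  shows "v \<in> span {k}"
proof -
  obtain a where a: "k - a *\<^sub>R e \<in> span N" using span_breakdown_eq[of k e N] sp by auto
  obtain b where b: "v - b *\<^sub>R e \<in> span N" using span_breakdown_eq[of v e N] sp by auto
  define z where "z = b *\<^sub>R k - a *\<^sub>R v"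
  have "z = b *\<^sub>R (k - a *\<^sub>R e) - a *\<^sub>R (v - b *\<^sub>R e)" unfolding z_def by (simp add: algebra_simps)
  hence zs: "z \<in> span N" using a b by (simp add: span_diff span_scale)
  have "B z z = b*b* B k k - b*a*B k v - a*b*B v k + a*a*B v v"
    unfolding z_def using bil by (simp add: bilinear_lsub bilinear_rsub bilinear_lmul bilinear_rmul algebra_simps)
  moreover have "B v k = 0" using sym kv by metis
  ultimately have "B z z = 0" using kk vv kv by simp
  hence z0: "z = 0" using def_span[OF bil fin d s orth zs] by simp
  have a0: "a \<noteq> 0"
  proof
    assume "a = 0"
    hence "k \<in> span N" using a by simp
    thus False using def_span[OF bil fin d s orth _ kk] k0 by simp
  qed
  have "v = (b / a) *\<^sub>R k" using z0 a0 unfolding z_def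
    by (metis (no_types, lifting) eq_vector_fraction_iff eq_iff_diff_eq_0)
  thus ?thesis by (metis span_base span_scale singletonI)
qed


lemma lor_null:
  fixes B :: "'a::euclidean_space \<Rightarrow> 'a \<Rightarrow> real"
  assumes inner: "nondeg_inner B" and lor: "lorentzian B"
    and kk: "B k k = 0" and k0: "k \<noteq> 0" and vv: "B v v = 0" and kv: "B k v = 0"
  shows "v \<in> span {k}"
proof -
  have bil: "bilinear B" and sym: "\<forall>x y. B x y = B y x" using inner by (auto simp: nondeg_inner_def)
  obtain n where "has_signature B 1 n \<or> has_signature B n 1" using lor by (auto simp: lorentzian_def)
  then show ?thesis
  proof
    assume "has_signature B 1 n"
    then obtain P N where fP: "finite N" and c: "card P = 1" and sp: "span (P \<union> N) = UNIV"
      and d: "\<forall>x\<in>N. B x x = -1" and o: "\<forall>x\<in>P \<union> N. \<forall>y\<in>P \<union> N. x \<noteq> y \<longrightarrow> B x y = 0"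
      unfolding has_signature_def by blast
    obtain e where "P = {e}" using c card_1_singletonE by blast
    hence sp': "span (insert e N) = UNIV" using sp by simp
    have o': "\<forall>x\<in>N. \<forall>y\<in>N. x \<noteq> y \<longrightarrow> B x y = 0" using o by blast
    show ?thesis by (rule lor_core[OF bil sym fP d _ o' sp' kk k0 vv kv]) simp
  next
    assume "has_signature B n 1"
    then obtain P N where fP: "finite P" and c: "card N = 1" and sp: "span (P \<union> N) = UNIV"
      and d: "\<forall>x\<in>P. B x x = 1" and o: "\<forall>x\<in>P \<union> N. \<forall>y\<in>P \<union> N. x \<noteq> y \<longrightarrow> B x y = 0"
      unfolding has_signature_def by blast
    obtain e where "N = {e}" using c card_1_singletonE by blast
    hence sp': "span (insert e P) = UNIV" using sp by simp
    have o': "\<forall>x\<in>P. \<forall>y\<in>P. x \<noteq> y \<longrightarrow> B x y = 0" using o by blast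
    show ?thesis by (rule lor_core[OF bil sym fP d _ o' sp' kk k0 vv kv]) simp
  qed
qed

lemma converse:
  fixes B :: "'a::euclidean_space \<Rightarrow> 'a \<Rightarrow> real"
  assumes bil: "bilinear B" and sym: "\<forall>x y. B x y = B y x"
    and kk: "B k k = 0" and kw: "B k w = 0"
  shows "(\<lambda>x. tens B k w x - tens B w k x) \<circ> (\<lambda>x. tens B k w x - tens B w k x)
     = (\<lambda>x. (- B w w) *\<^sub>R tens B k k x)"
proof
  fix x
  have wk: "B w k = 0" using sym kw by metis
  show "((\<lambda>x. tens B k w x - tens B w k x) \<circ> (\<lambda>x. tens B k w x - tens B w k x)) x
     = (- B w w) *\<^sub>R tens B k k x"
    using bil kk kw wk
    by (simp add: tens_def bilinear_rsub bilinear_rmul algebra_simps)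
qed

theorem mainTheorem14:
  fixes B :: "'a::euclidean_space \<Rightarrow> 'a \<Rightarrow> real" and p q :: nat
  assumes inner: "nondeg_inner B"
    and sig: "has_signature B p q" and pq: "p \<noteq> 0 \<or> q \<noteq> 0"
  shows "(\<forall>(F::'a \<Rightarrow> 'a) k (\<mu>::real).
            skew_sym B F \<and> k \<noteq> 0 \<and> B k k = 0 \<and> \<mu> \<noteq> 0
            \<and> F \<circ> F = (\<lambda>x. \<mu> *\<^sub>R tens B k k x)
            \<and> (lorentzian B \<or> F ` {x. B k x = 0} \<subseteq> span {k})
          \<longrightarrow> (\<exists>w. independent {k, w} \<and> k \<noteq> w \<and> B k w = 0
                  \<and> F = (\<lambda>x. tens B k w x - tens B w k x) \<and> \<mu> = - B w w))
       \<and> (\<forall>(F::'a \<Rightarrow> 'a) k w.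
            B k k = 0 \<and> B k w = 0 \<and> F = (\<lambda>x. tens B k w x - tens B w k x)
          \<longrightarrow> F \<circ> F = (\<lambda>x. (- B w w) *\<^sub>R tens B k k x))"
proof -
  have bil: "bilinear B" and sym: "\<forall>x y. B x y = B y x"
    and nd: "\<And>x. (\<forall>y. B x y = 0) \<Longrightarrow> x = 0" using inner by (auto simp: nondeg_inner_def)
  have l0: "B 0 y = 0" for y using bilinear_lzero[OF bil] by simp
  have r0: "B y 0 = 0" for y using bilinear_rzero[OF bil] by simp
  show ?thesis
  proof (intro conjI allI impI)
    fix F k w
    assume "B k k = 0 \<and> B k w = 0 \<and> F = (\<lambda>x. tens B k w x - tens B w k x)"
    thus "F \<circ> F = (\<lambda>x. (- B w w) *\<^sub>R tens B k k x)" using converse[OF bil sym] by blast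
  next
    fix F k and \<mu> :: real
    assume A: "skew_sym B F \<and> k \<noteq> 0 \<and> B k k = 0 \<and> \<mu> \<noteq> 0
            \<and> F \<circ> F = (\<lambda>x. \<mu> *\<^sub>R tens B k k x)
            \<and> (lorentzian B \<or> F ` {x. B k x = 0} \<subseteq> span {k})"
    have lin: "linear F" and sk: "\<And>x y. B (F x) y = - B x (F y)" using A by (auto simp: skew_sym_def)
    have k0: "k \<noteq> 0" and kk: "B k k = 0" and mu: "\<mu> \<noteq> 0" using A by auto
    have sq: "F (F x) = (\<mu> * B k x) *\<^sub>R k" for x
    proof -
      have "(F \<circ> F) x = \<mu> *\<^sub>R tens B k k x" using A by simp
      thus ?thesis by (simp add: tens_def)
    qed
    have F0: "F 0 = 0" using lin by (simp add: linear_0)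
    have H: "F y \<in> span {k}" if y: "B k y = 0" for y
    proof (cases "lorentzian B")
      case True
      have Fk: "F k = 0"
      proof -
        have "B (F k) (F k) = 0" using sk[of k "F k"] sq[of k] kk bil r0
          by (simp add: bilinear_rmul)
        moreover have "B k (F k) = 0" using sk[of k k] sym by (metis add.inverse_unique add_eq_0_iff2 neg_equal_zero)
        ultimately have "F k \<in> span {k}" using lor_null[OF inner True kk k0] by blast
        then obtain c where c: "F k = c *\<^sub>R k" by (auto simp: span_singleton)
        have "F (F k) = (c*c) *\<^sub>R k" using c lin by (simp add: linear_scale)
        moreover have "F (F k) = 0" using sq[of k] kk by simp
        ultimately have "c = 0" using k0 by simp
        thus ?thesis using c by simp
      qed
      have "B (F y) (F y) = 0" using sk[of y "F y"] sq[of y] y bil r0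
          by (simp add: bilinear_rmul)
      moreover have "B k (F y) = 0" using sk[of k y] Fk l0 sym by simp
      ultimately show ?thesis using lor_null[OF inner True kk k0] by blast
    next
      case False
      thus ?thesis using A y by blast
    qed
    have Fk: "F k = 0"
    proof -
      have "F k \<in> span {k}" using H kk by blast
      then obtain c where c: "F k = c *\<^sub>R k" by (auto simp: span_singleton)
      have "F (F k) = (c*c) *\<^sub>R k" using c lin by (simp add: linear_scale)
      moreover have "F (F k) = 0" using sq[of k] kk by simp
      ultimately have "c = 0" using k0 by simp
      thus ?thesis using c by simp
    qed
    obtain y0 where y0: "B k y0 \<noteq> 0" using nd k0 by blast
    define u where "u = (1 / B k y0) *\<^sub>R y0"
    have ku: "B k u = 1" unfolding u_def using y0 bil by (simp add: bilinear_rmul)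
    define w where "w = - F u"
    have kw: "B k w = 0" unfolding w_def using sk[of k u] Fk l0 bil by (simp add: bilinear_rneg)
    have uFu: "B u (F u) = 0" using sk[of u u] sym by (metis add.inverse_unique add_eq_0_iff2 neg_equal_zero)
    have Feq: "F = (\<lambda>x. tens B k w x - tens B w k x)"
    proof
      fix x
      define y where "y = x - B k x *\<^sub>R u"
      have ky: "B k y = 0" unfolding y_def using ku bil by (simp add: bilinear_rsub bilinear_rmul)
      obtain c where c: "F y = c *\<^sub>R k" using H[OF ky] by (auto simp: span_singleton)
      have Fy: "F y = F x - B k x *\<^sub>R F u" unfolding y_def using lin by (simp add: linear_diff linear_scale)
      have "B (F y) u = c" using c ku bil by (simp add: bilinear_lmul)
      moreover have "B (F y) u = - B x (F u)" using sk[of y u] uFu bil unfolding y_def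
        by (simp add: bilinear_lsub bilinear_lmul)
      ultimately have cc: "c = - B (F u) x" using sym by metis
      have "F x = F y + B k x *\<^sub>R F u" using Fy by simp
      also have "\<dots> = tens B k w x - tens B w k x" unfolding tens_def w_def c cc
        using bil by (simp add: bilinear_lneg)
      finally show "F x = tens B k w x - tens B w k x" .
    qed
    have "(F \<circ> F) u = (- B w w) *\<^sub>R tens B k k u" using converse[OF bil sym kk kw] Feq by simp
    hence "\<mu> *\<^sub>R k = (- B w w) *\<^sub>R k" using sq[of u] ku by (simp add: tens_def)
    hence muw: "\<mu> = - B w w" using k0 by (metis scaleR_cancel_right scaleR_minus_left)
    have wns: "w \<notin> span {k}"
    proof
      assume "w \<in> span {k}"
      then obtain t where t: "w = t *\<^sub>R k" by (auto simp: span_singleton)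
      have "F (F u) = 0" using Feq t bil kk by (simp add: tens_def bilinear_lmul bilinear_rmul sym)
      thus False using sq[of u] ku mu k0 by simp
    qed
    have w0: "w \<noteq> 0" using wns span_zero by blast
    have kne: "k \<noteq> w" using wns span_base by blast
    have "k \<notin> span {w}"
    proof
      assume "k \<in> span {w}"
      then obtain t where t: "k = t *\<^sub>R w" by (auto simp: span_singleton)
      hence "t \<noteq> 0" using k0 by auto
      hence "w = (1/t) *\<^sub>R k" using t by simp
      thus False using wns by (metis span_base span_scale singletonI)
    qed
    hence ind: "independent {k, w}" using kne w0 by (simp add: independent_insert)
    show "\<exists>w. independent {k, w} \<and> k \<noteq> w \<and> B k w = 0
                  \<and> F = (\<lambda>x. tens B k w x - tens B w k x) \<and> \<mu> = - B w w"
      using ind kne kw Feq muw by blast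
  qed
qed

end
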